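(* Let $\nu>0$ and let $F$ be a distribution function on $\mathbb R$ with $F\in\mathrm{AGG}(\nu)$. For each $p\in\mathbb N$, let $\epsilon_p(1),\ldots,\epsilon_p(p)$ be random variables, each with marginal distribution $F$, with arbitrary dependence among them. Let $M_p=\max_{j=1,\ldots,p}\epsilon_p(j)$, let $u_q=F^{\leftarrow}(1-1/q)$, let $c_p=u_{p\log p}/u_p-1$, and set $$\xi_p:=\frac{M_p}{(1+c_p)u_p}.$$ Then there exist $p_0,t_0>0$ and an absolute constant $C>0$ such that $$\mathbb P[\xi_p>t]\le \exp\{-Ct^\nu\}\quad\text{for all } p>p_0,\ t>t_0.$$ In particular, the family $\{(\xi_p)_+ : p\in\mathbb N\}$ is uniformly integrable.
   Context: $F^{\leftarrow}(u)=\inf\{x: F(x)\ge u\}$ denotes the generalized inverse, and $\overline F=1-F$. A distribution $F$ has asymptotically generalized Gaussian tails of index $\nu>0$, written $F\in\mathrm{AGG}(\nu)$, if $\log \overline F(x) = -\frac{1}{\nu}x^\nu(1+o(1))$ as $x\to\infty$ (equivalently, for every $\epsilon>0$ there is $C(\epsilon)$ with $-\frac1\nu x^\nu(1+\epsilon)\le \log\overline F(x)\le -\frac1\nu x^\nu(1-\epsilon)$ for all $x\ge C(\epsilon)$). $(a)_+=\max\{a,0\}$. *)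

theory Defs
  imports "HOL-Probability.Probability"
begin

definition distribution_function :: "(real \<Rightarrow> real) \<Rightarrow> bool" where
  "distribution_function F \<longleftrightarrow>
     mono F \<and> (\<forall>x. continuous (at_right x) F) \<and>
     (F \<longlongrightarrow> 0) at_bot \<and> (F \<longlongrightarrow> 1) at_top"

definition gen_inv :: "(real \<Rightarrow> real) \<Rightarrow> real \<Rightarrow> real" where
  "gen_inv F u = Inf {x. u \<le> F x}"

definition AGG :: "real \<Rightarrow> (real \<Rightarrow> real) \<Rightarrow> bool" where
  "AGG \<nu> F \<longleftrightarrow>
     (\<forall>\<epsilon>>0. \<exists>C>0. \<forall>x\<ge>C.
        - (1/\<nu>) * x powr \<nu> * (1 + \<epsilon>) \<le> ln (1 - F x) \<and>
        ln (1 - F x) \<le> - (1/\<nu>) * x powr \<nu> * (1 - \<epsilon>))"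

definition unif_integrable :: "('i \<Rightarrow> 'a measure) \<Rightarrow> ('i \<Rightarrow> 'a \<Rightarrow> real) \<Rightarrow> 'i set \<Rightarrow> bool" where
  "unif_integrable M X I \<longleftrightarrow>
     (\<forall>i\<in>I. integrable (M i) (X i)) \<and>
     (\<forall>e>0. \<exists>K. \<forall>i\<in>I.
        (\<integral>\<omega>. indicator {\<omega>\<in>space (M i). K < \<bar>X i \<omega>\<bar>} \<omega> * \<bar>X i \<omega>\<bar> \<partial>M i) \<le> e)"

end

theory Submission imports Defs begin

lemma df_le1:
  assumes "distribution_function F" shows "F x \<le> 1"
proof -
  have m: "mono F" and t: "(F \<longlongrightarrow> 1) at_top" using assms unfolding distribution_function_def by auto
  have "eventually (\<lambda>y. F x \<le> F y) at_top"
    using eventually_ge_at_top[of x] by eventually_elim (use m in \<open>auto simp: mono_def\<close>)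
  from tendsto_lowerbound[OF t this] show ?thesis by simp
qed

lemma df_ge0:
  assumes "distribution_function F" shows "0 \<le> F x"
proof -
  have m: "mono F" and t: "(F \<longlongrightarrow> 0) at_bot" using assms unfolding distribution_function_def by auto
  have "eventually (\<lambda>y. F y \<le> F x) at_bot"
    using eventually_le_at_bot[of x] by eventually_elim (use m in \<open>auto simp: mono_def\<close>)
  from tendsto_upperbound[OF t this] show ?thesis by simp
qed

lemma agg_upper:
  assumes "distribution_function F" "\<nu> > 0" "\<epsilon> > 0" "x > 0"
    "ln (1 - F x) \<le> - (1/\<nu>) * x powr \<nu> * (1 - \<epsilon>)"
  shows "1 - F x \<le> exp (- (1/\<nu>) * x powr \<nu> * (1 - \<epsilon>))"
proof (cases "1 - F x = 0")
  case True then show ?thesis by simp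
next
  case False
  with df_le1[OF assms(1), of x] have "1 - F x > 0" by simp
  then show ?thesis using assms(5) by (metis exp_le_cancel_iff exp_ln)
qed

lemma df_lt1:
  assumes "distribution_function F" "\<nu> > 0" "AGG \<nu> F" shows "F x < 1"
proof -
  obtain C where C: "C > 0" "\<And>x. x \<ge> C \<Longrightarrow> ln (1 - F x) \<le> - (1/\<nu>) * x powr \<nu> * (1 - 1/2)"
    using assms(3) unfolding AGG_def by (metis half_gt_zero zero_less_one)
  define y where "y = max x C"
  have "y \<ge> C" "y > 0" using C by (auto simp: y_def)
  have "ln (1 - F y) < 0"
  proof -
    have "0 < (1/\<nu>) * y powr \<nu> * (1 - 1/2)" using \<open>y > 0\<close> assms(2) by simp
    then show ?thesis using C(2)[OF \<open>y \<ge> C\<close>] by linarith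
  qed
  then have "1 - F y \<noteq> 0" by auto
  with df_le1[OF assms(1), of y] have "F y < 1" by simp
  moreover have "F x \<le> F y" using assms(1) unfolding distribution_function_def mono_def y_def by auto
  ultimately show ?thesis by simp
qed

lemma u_lower:
  assumes df: "distribution_function F" and nu: "\<nu> > 0" and agg: "AGG \<nu> F" and e: "\<epsilon> > 0" and "C > 0"
    and lb: "\<And>x. x \<ge> C \<Longrightarrow> - (1/\<nu>) * x powr \<nu> * (1 + \<epsilon>) \<le> ln (1 - F x)"
    and q: "q > 1" and FC: "F C < 1 - 1/q"
  shows "(\<nu> * ln q / (1 + \<epsilon>)) powr (1/\<nu>) \<le> gen_inv F (1 - 1/q)"
proof -
  define L where "L = (\<nu> * ln q / (1 + \<epsilon>)) powr (1/\<nu>)"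
  define S where "S = {x. 1 - 1/q \<le> F x}"
  have lnq: "ln q > 0" using q by simp
  have L0: "L \<ge> 0" by (simp add: L_def)
  have LL: "L powr \<nu> = \<nu> * ln q / (1 + \<epsilon>)"
    unfolding L_def using nu e lnq by (simp add: powr_powr)
  have t: "(F \<longlongrightarrow> 1) at_top" using df unfolding distribution_function_def by auto
  have "1 - 1/q < 1" using q by simp
  from order_tendstoD(1)[OF t this] obtain y where "1 - 1/q < F y"
    by (meson eventually_at_top_linorder order_refl)
  then have ne: "S \<noteq> {}" unfolding S_def by (auto intro: less_imp_le)
  have "L \<le> x" if "x \<in> S" for x
  proof (rule ccontr)
    assume "\<not> L \<le> x"
    then have xL: "x < L" by simp
    have Fx: "1 - F x \<le> 1/q" using that by (simp add: S_def)
    show False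
    proof (cases "x < C")
      case True
      then have "F x \<le> F C" using df unfolding distribution_function_def mono_def by auto
      then show False using FC Fx by simp
    next
      case False
      then have xC: "x \<ge> C" by simp
      then have x0: "x > 0" using \<open>C > 0\<close> by simp
      have "x powr \<nu> < L powr \<nu>" using powr_less_mono2[OF nu _ xL] x0 by simp
      then have "(1/\<nu>) * x powr \<nu> * (1 + \<epsilon>) < (1/\<nu>) * L powr \<nu> * (1 + \<epsilon>)"
        using nu e by (intro mult_strict_right_mono mult_strict_left_mono) auto
      then have "- (1/\<nu>) * L powr \<nu> * (1 + \<epsilon>) < - (1/\<nu>) * x powr \<nu> * (1 + \<epsilon>)"
        by linarith
      also have "- (1/\<nu>) * L powr \<nu> * (1 + \<epsilon>) = - ln q" using LL nu e by (simp add: field_simps)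
      finally have "- ln q < ln (1 - F x)" using lb[OF xC] by linarith
      moreover have "1 - F x > 0" using df_lt1[OF df nu agg, of x] by simp
      moreover have "- ln q = ln (1/q)" using q by (simp add: ln_div)
      ultimately have "1/q < 1 - F x"
        using q by (metis ln_less_cancel_iff zero_less_divide_1_iff less_trans zero_less_one)
      then show False using Fx by simp
    qed
  qed
  then have "L \<le> Inf S" using ne by (intro cInf_greatest) auto
  then show ?thesis by (simp add: L_def S_def gen_inv_def)
qed



lemma exp_ge_pow:
  fixes y :: real assumes "y \<ge> 0" "k \<ge> 1"
  shows "(y / real k) ^ k \<le> exp y"
proof -
  have "exp y = exp (y / real k) ^ k"
    using exp_of_nat_mult[of k "y / real k"] assms by simp
  moreover have "y / real k \<le> exp (y / real k)"
    using exp_ge_add_one_self[of "y / real k"] by linarith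
  ultimately show ?thesis using assms by (simp add: power_mono)
qed

lemma exp_neg_bound:
  fixes m C \<nu> :: real
  assumes "m \<ge> 1" "C > 0" "\<nu> > 0" "k \<ge> 1" "real k * \<nu> \<ge> 3"
  shows "exp (- C * m powr \<nu>) \<le> (real k / C) ^ k / m ^ 3"
proof -
  have "m ^ 3 = m powr 3" using assms by (simp add: powr_realpow)
  also have "\<dots> \<le> m powr (\<nu> * real k)" using assms by (intro powr_mono) (auto simp: mult.commute)
  also have "\<dots> = (m powr \<nu>) ^ k" using assms by (simp add: powr_powr[symmetric] powr_realpow)
  finally have a: "m ^ 3 \<le> (m powr \<nu>) ^ k" .
  have "(C / real k) ^ k * m ^ 3 \<le> (C / real k) ^ k * (m powr \<nu>) ^ k"
    using a assms by (intro mult_left_mono) auto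
  also have "\<dots> = (C * m powr \<nu> / real k) ^ k" by (simp add: power_mult_distrib power_divide)
  also have "\<dots> \<le> exp (C * m powr \<nu>)" using assms by (intro exp_ge_pow) auto
  finally have b: "(C / real k) ^ k * m ^ 3 \<le> exp (C * m powr \<nu>)" .
  have pos: "(C / real k) ^ k * m ^ 3 > 0" using assms by simp
  have "exp (- C * m powr \<nu>) = 1 / exp (C * m powr \<nu>)" by (simp add: exp_minus field_simps)
  also have "\<dots> \<le> 1 / ((C / real k) ^ k * m ^ 3)" using b pos by (intro divide_left_mono) auto
  also have "\<dots> = (real k / C) ^ k / m ^ 3" by (simp add: power_divide field_simps)
  finally show ?thesis .
qed

lemma summ_b:
  fixes C \<nu> :: real assumes "C > 0" "\<nu> > 0"
  shows "summable (\<lambda>n::nat. (real n + 1) * exp (- C * (real n - 1) powr \<nu>))"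
proof -
  define k where "k = nat \<lceil>3 / \<nu>\<rceil> + 1"
  have k1: "k \<ge> 1" by (simp add: k_def)
  have "3 / \<nu> \<le> real k" unfolding k_def by linarith
  then have k3: "real k * \<nu> \<ge> 3" using assms by (simp add: field_simps)
  define D where "D = (real k / C) ^ k"
  have D0: "D \<ge> 0" using assms by (simp add: D_def)
  have s1: "summable (\<lambda>n::nat. real (n + 1) powr (-2))"
    using summable_iff_shift[of "\<lambda>n. real n powr (-2)" 1] summable_real_powr_iff[of "-2"] by simp
  have "summable (\<lambda>n::nat. (real (n+2) + 1) * exp (- C * (real (n+2) - 1) powr \<nu>))"
  proof (rule summable_comparison_test[OF _ summable_mult[OF s1, of "3 * D"]])
    show "\<exists>N. \<forall>n\<ge>N. norm ((real (n+2) + 1) * exp (- C * (real (n+2) - 1) powr \<nu>)) \<le> 3 * D * real (n + 1) powr (-2)"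
    proof (intro exI allI impI)
      fix n :: nat
      define m where "m = real n + 1"
      have m1: "m \<ge> 1" by (simp add: m_def)
      have e: "exp (- C * m powr \<nu>) \<le> D / m ^ 3"
        unfolding D_def using exp_neg_bound[OF m1 assms(1,2) k1 k3] .
      have "norm ((real (n+2) + 1) * exp (- C * (real (n+2) - 1) powr \<nu>)) = (m + 2) * exp (- C * m powr \<nu>)"
        by (simp add: m_def add.commute)
      also have "\<dots> \<le> (m + 2) * (D / m ^ 3)" using e m1 by (intro mult_left_mono) auto
      also have "\<dots> \<le> (3 * m) * (D / m ^ 3)" using m1 D0 by (intro mult_right_mono) auto
      also have "\<dots> = 3 * D / m ^ 2" using m1 by (simp add: power2_eq_square power3_eq_cube field_simps)
      also have "\<dots> = 3 * D * m powr (-2)" using m1 by (simp add: powr_minus powr_realpow divide_inverse)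
      finally show "norm ((real (n+2) + 1) * exp (- C * (real (n+2) - 1) powr \<nu>)) \<le> 3 * D * real (n + 1) powr (-2)"
        by (simp add: m_def add.commute)
    qed
  qed
  then show ?thesis using summable_iff_shift[of "\<lambda>n. (real n + 1) * exp (- C * (real n - 1) powr \<nu>)" 2] by simp
qed

lemma ennreal_term_le: "(f i::ennreal) \<le> suminf f"
  using sum_le_suminf[OF summableI, of "{i}" f] by simp

lemma tail_nn:
  fixes N :: "'a measure" and X :: "'a \<Rightarrow> real"
  assumes ps: "prob_space N" and Xm: "X \<in> borel_measurable N" and C: "C > 0" and nu: "\<nu> > 0"
    and tb: "\<And>t. t > t0 \<Longrightarrow> measure N {\<omega>\<in>space N. X \<omega> > t} \<le> exp (- C * t powr \<nu>)"
    and K: "real K > t0 + 1"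
  shows "(\<integral>\<^sup>+\<omega>. ennreal (indicator {\<omega>\<in>space N. real K < X \<omega>} \<omega> * X \<omega>) \<partial>N)
     \<le> ennreal (\<Sum>i. (real (i + K) + 1) * exp (- C * (real (i + K) - 1) powr \<nu>))"
proof -
  interpret prob_space N by fact
  define b where "b = (\<lambda>n::nat. (real n + 1) * exp (- C * (real n - 1) powr \<nu>))"
  define A where "A = (\<lambda>n::nat. {\<omega>\<in>space N. real n \<le> X \<omega>})"
  have Am: "A n \<in> sets N" for n unfolding A_def using Xm by measurable
  have pw: "ennreal (indicator {\<omega>\<in>space N. real K < X \<omega>} \<omega> * X \<omega>)
      \<le> (\<Sum>i. ennreal (real (i + K) + 1) * indicator (A (i + K)) \<omega>)" for \<omega>
  proof (cases "\<omega> \<in> space N \<and> real K < X \<omega>")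
    case False then show ?thesis by (auto simp: indicator_def)
  next
    case True
    define m where "m = nat \<lfloor>X \<omega>\<rfloor>"
    have mK: "m \<ge> K" using True unfolding m_def by linarith
    have mX: "real m \<le> X \<omega>" "X \<omega> \<le> real m + 1" using True unfolding m_def by linarith+
    define i where "i = m - K"
    have im: "i + K = m" using mK by (simp add: i_def)
    have "ennreal (indicator {\<omega>\<in>space N. real K < X \<omega>} \<omega> * X \<omega>) = ennreal (X \<omega>)"
      using True by simp
    also have "\<dots> \<le> ennreal (real (i + K) + 1) * indicator (A (i + K)) \<omega>"
    proof -
      have "ennreal (X \<omega>) \<le> ennreal (real m + 1)" using mX by (intro ennreal_leI) simp
      moreover have "\<omega> \<in> A (i + K)" using True mX im by (simp add: A_def)
      ultimately show ?thesis using im by simp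
    qed
    also have "\<dots> \<le> (\<Sum>i. ennreal (real (i + K) + 1) * indicator (A (i + K)) \<omega>)"
      by (rule ennreal_term_le)
    finally show ?thesis .
  qed
  have "(\<integral>\<^sup>+\<omega>. ennreal (indicator {\<omega>\<in>space N. real K < X \<omega>} \<omega> * X \<omega>) \<partial>N)
      \<le> (\<integral>\<^sup>+\<omega>. (\<Sum>i. ennreal (real (i + K) + 1) * indicator (A (i + K)) \<omega>) \<partial>N)"
    by (intro nn_integral_mono pw)
  also have "\<dots> = (\<Sum>i. \<integral>\<^sup>+\<omega>. ennreal (real (i + K) + 1) * indicator (A (i + K)) \<omega> \<partial>N)"
    using Am by (intro nn_integral_suminf borel_measurable_times_ennreal borel_measurable_indicator) auto
  also have "\<dots> = (\<Sum>i. ennreal (real (i + K) + 1) * emeasure N (A (i + K)))"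
    using Am by (simp add: nn_integral_cmult_indicator)
  also have "\<dots> \<le> (\<Sum>i. ennreal (b (i + K)))"
  proof (intro suminf_le summableI)
    fix i
    define n where "n = i + K"
    have n1: "real n - 1 > t0" using K by (simp add: n_def)
    have "A n \<subseteq> {\<omega>\<in>space N. X \<omega> > real n - 1}" by (auto simp: A_def)
    then have "measure N (A n) \<le> measure N {\<omega>\<in>space N. X \<omega> > real n - 1}"
      using Xm by (intro finite_measure_mono) measurable
    also have "\<dots> \<le> exp (- C * (real n - 1) powr \<nu>)" using tb[OF n1] .
    finally have "measure N (A n) \<le> exp (- C * (real n - 1) powr \<nu>)" .
    then have "(real n + 1) * measure N (A n) \<le> b n"
      unfolding b_def by (intro mult_left_mono) auto
    then have "ennreal ((real n + 1) * measure N (A n)) \<le> ennreal (b n)"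
      by (rule ennreal_leI)
    then have "ennreal (real n + 1) * emeasure N (A n) \<le> ennreal (b n)"
      by (simp add: emeasure_eq_measure ennreal_mult)
    then show "ennreal (real (i + K) + 1) * emeasure N (A (i + K)) \<le> ennreal (b (i + K))"
      by (simp add: n_def)
  qed
  also have "\<dots> = ennreal (\<Sum>i. b (i + K))"
  proof (rule suminf_ennreal)
    show "0 \<le> b (i + K)" for i by (simp add: b_def)
    show "(\<Sum>i. ennreal (b (i + K))) \<noteq> top"
    proof (intro ennreal_suminf_neq_top)
      show "summable (\<lambda>i. b (i + K))"
        using summ_b[OF C nu] summable_iff_shift[of b K] unfolding b_def by blast
    qed (simp add: b_def)
  qed
  finally show ?thesis by (simp add: b_def)
qed

lemma UI_from_tail:
  fixes M :: "'i \<Rightarrow> 'a measure" and X :: "'i \<Rightarrow> 'a \<Rightarrow> real"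
  assumes ps: "\<And>p. p \<in> I \<Longrightarrow> prob_space (M p)"
    and Xm: "\<And>p. p \<in> I \<Longrightarrow> X p \<in> borel_measurable (M p)"
    and nn: "\<And>p \<omega>. X p \<omega> \<ge> 0" and C: "C > 0" and nu: "\<nu> > 0"
    and tb: "\<And>p t. p \<in> I \<Longrightarrow> t > thr \<Longrightarrow> measure (M p) {\<omega>\<in>space (M p). X p \<omega> > t} \<le> exp (- C * t powr \<nu>)"
  shows "unif_integrable M X I"
proof -
  define b where "b = (\<lambda>n::nat. (real n + 1) * exp (- C * (real n - 1) powr \<nu>))"
  have sb: "summable b" unfolding b_def by (rule summ_b[OF C nu])
  have b0: "b n \<ge> 0" for n by (simp add: b_def)
  obtain K0 :: nat where K0: "real K0 > thr + 1" using reals_Archimedean2 by blast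
  have tail: "(\<integral>\<^sup>+\<omega>. ennreal (indicator {\<omega>\<in>space (M p). real K < X p \<omega>} \<omega> * X p \<omega>) \<partial>M p)
     \<le> ennreal (\<Sum>i. b (i + K))" if "p \<in> I" "real K > thr + 1" for p K
    using tail_nn[OF ps[OF that(1)] Xm[OF that(1)] C nu tb[OF that(1)] that(2)] unfolding b_def .
  have int: "integrable (M p) (X p)" if p: "p \<in> I" for p
  proof (rule integrableI_bounded)
    interpret prob_space "M p" using ps[OF p] .
    show "X p \<in> borel_measurable (M p)" using Xm[OF p] .
    have pw: "ennreal (norm (X p \<omega>)) \<le> ennreal (real K0) + ennreal (indicator {\<omega>\<in>space (M p). real K0 < X p \<omega>} \<omega> * X p \<omega>)"
      if "\<omega> \<in> space (M p)" for \<omega>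
    proof (cases "real K0 < X p \<omega>")
      case True then show ?thesis using that nn[of p \<omega>] by (simp add: add_increasing)
    next
      case False then show ?thesis using that nn[of p \<omega>] by (simp add: ennreal_leI)
    qed
    have "(\<integral>\<^sup>+\<omega>. ennreal (norm (X p \<omega>)) \<partial>M p) \<le>
        (\<integral>\<^sup>+\<omega>. ennreal (real K0) + ennreal (indicator {\<omega>\<in>space (M p). real K0 < X p \<omega>} \<omega> * X p \<omega>) \<partial>M p)"
      by (intro nn_integral_mono pw)
    also have "\<dots> = ennreal (real K0) + (\<integral>\<^sup>+\<omega>. ennreal (indicator {\<omega>\<in>space (M p). real K0 < X p \<omega>} \<omega> * X p \<omega>) \<partial>M p)"
      using Xm[OF p] by (subst nn_integral_add) (auto simp: emeasure_space_1)
    also have "\<dots> \<le> ennreal (real K0) + ennreal (\<Sum>i. b (i + K0))"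
      using tail[OF p K0] by (rule add_left_mono)
    also have "\<dots> < \<infinity>" by (simp flip: ennreal_plus)
    finally show "(\<integral>\<^sup>+\<omega>. ennreal (norm (X p \<omega>)) \<partial>M p) < \<infinity>" .
  qed
  have ui: "\<exists>K. \<forall>p\<in>I. (\<integral>\<omega>. indicator {\<omega>\<in>space (M p). K < \<bar>X p \<omega>\<bar>} \<omega> * \<bar>X p \<omega>\<bar> \<partial>M p) \<le> e"
    if e: "e > 0" for e
  proof -
    obtain N0 where N0: "\<And>n. n \<ge> N0 \<Longrightarrow> norm (\<Sum>i. b (i + n)) < e"
      using suminf_exist_split[OF e sb] by blast
    define K where "K = max N0 K0"
    have K1: "real K > thr + 1" using K0 by (simp add: K_def)
    have sK: "norm (\<Sum>i. b (i + K)) < e" using N0 by (simp add: K_def)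
    show ?thesis
    proof (intro exI ballI)
      fix p assume p: "p \<in> I"
      have eq: "(\<lambda>\<omega>. indicator {\<omega>\<in>space (M p). real K < \<bar>X p \<omega>\<bar>} \<omega> * \<bar>X p \<omega>\<bar>)
          = (\<lambda>\<omega>. indicator {\<omega>\<in>space (M p). real K < X p \<omega>} \<omega> * X p \<omega>)"
        using nn by (simp add: abs_of_nonneg)
      have "(\<integral>\<^sup>+\<omega>. ennreal (indicator {\<omega>\<in>space (M p). real K < X p \<omega>} \<omega> * X p \<omega>) \<partial>M p) \<le> ennreal e"
      proof -
        have "(\<Sum>i. b (i + K)) \<le> e" using sK by simp
        then have "ennreal (\<Sum>i. b (i + K)) \<le> ennreal e" by (rule ennreal_leI)
        then show ?thesis using tail[OF p K1] by (rule order_trans[rotated])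
      qed
      then show "(\<integral>\<omega>. indicator {\<omega>\<in>space (M p). real K < \<bar>X p \<omega>\<bar>} \<omega> * \<bar>X p \<omega>\<bar> \<partial>M p) \<le> e"
        unfolding eq using e by (intro integral_real_bounded) auto
    qed
  qed
  show ?thesis unfolding unif_integrable_def using int ui by blast
qed


lemma max_tail:
  fixes N :: "'a measure" and e :: "nat \<Rightarrow> 'a \<Rightarrow> real"
  assumes ps: "prob_space N" and p: "p \<ge> 1"
    and em: "\<And>j. j \<in> {1..p} \<Longrightarrow> e j \<in> borel_measurable N"
    and marg: "\<And>j x. j \<in> {1..p} \<Longrightarrow> measure N {\<omega> \<in> space N. e j \<omega> \<le> x} = F x"
    and u: "u > 0"
  shows "measure N {\<omega> \<in> space N. Max ((\<lambda>j. e j \<omega>) ` {1..p}) / u > t} \<le> real p * (1 - F (t * u))"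
proof -
  interpret prob_space N by fact
  define B where "B = (\<lambda>j. {\<omega> \<in> space N. e j \<omega> > t * u})"
  have Bm: "B j \<in> sets N" if "j \<in> {1..p}" for j unfolding B_def using em[OF that] by measurable
  have sub: "{\<omega> \<in> space N. Max ((\<lambda>j. e j \<omega>) ` {1..p}) / u > t} \<subseteq> (\<Union>j\<in>{1..p}. B j)"
  proof
    fix \<omega> assume "\<omega> \<in> {\<omega> \<in> space N. Max ((\<lambda>j. e j \<omega>) ` {1..p}) / u > t}"
    then have w: "\<omega> \<in> space N" and "Max ((\<lambda>j. e j \<omega>) ` {1..p}) / u > t" by auto
    then have gt: "Max ((\<lambda>j. e j \<omega>) ` {1..p}) > t * u" using u by (simp add: pos_less_divide_eq)
    have "Max ((\<lambda>j. e j \<omega>) ` {1..p}) \<in> (\<lambda>j. e j \<omega>) ` {1..p}"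
      using p by (intro Max_in) auto
    then obtain j where "j \<in> {1..p}" "e j \<omega> = Max ((\<lambda>j. e j \<omega>) ` {1..p})" by auto
    then have "j \<in> {1..p}" "\<omega> \<in> B j" using gt w by (auto simp: B_def)
    then show "\<omega> \<in> (\<Union>j\<in>{1..p}. B j)" by blast
  qed
  have "measure N {\<omega> \<in> space N. Max ((\<lambda>j. e j \<omega>) ` {1..p}) / u > t} \<le> measure N (\<Union>j\<in>{1..p}. B j)"
    using Bm by (intro finite_measure_mono[OF sub]) auto
  also have "\<dots> \<le> (\<Sum>j\<in>{1..p}. measure N (B j))" using Bm by (intro measure_UNION_le) auto
  also have "\<dots> = (\<Sum>j\<in>{1..p}. 1 - F (t * u))"
  proof (rule sum.cong)
    fix j assume j: "j \<in> {1..p}"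
    have "B j = space N - {\<omega> \<in> space N. e j \<omega> \<le> t * u}" by (auto simp: B_def)
    moreover have "{\<omega> \<in> space N. e j \<omega> \<le> t * u} \<in> events" using em[OF j] by measurable
    ultimately show "measure N (B j) = 1 - F (t * u)" using prob_compl marg[OF j] by simp
  qed simp
  also have "\<dots> = real p * (1 - F (t * u))" by simp
  finally show ?thesis .
qed

lemma arith_bound:
  fixes \<nu> p u t y :: real
  assumes nu: "\<nu> > 0" and p0: "p > 0" and p: "ln p \<ge> 1" and u: "u > 0" and up: "u powr \<nu> \<ge> \<nu> * ln p * 3 / 4"
    and t: "t > 0" and tn: "t powr \<nu> \<ge> 4"
    and y: "y \<le> exp (- (1/\<nu>) * (t * u) powr \<nu> * (1 - 1/3))"
  shows "p * y \<le> exp (- (1/4) * t powr \<nu>)"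
proof -
  have "(t * u) powr \<nu> = t powr \<nu> * u powr \<nu>" using t u by (simp add: powr_mult)
  also have "\<dots> \<ge> t powr \<nu> * (\<nu> * ln p * 3 / 4)" using up by (intro mult_left_mono) auto
  finally have "(t * u) powr \<nu> \<ge> t powr \<nu> * (\<nu> * ln p * 3 / 4)" .
  then have "(1/\<nu>) * (t * u) powr \<nu> * (1 - 1/3) \<ge> (1/\<nu>) * (t powr \<nu> * (\<nu> * ln p * 3 / 4)) * (1 - 1/3)"
    using nu by (intro mult_right_mono mult_left_mono) auto
  also have "(1/\<nu>) * (t powr \<nu> * (\<nu> * ln p * 3 / 4)) * (1 - 1/3) = t powr \<nu> * ln p / 2"
    using nu by (simp add: field_simps)
  finally have a0: "(1/\<nu>) * (t * u) powr \<nu> * (1 - 1/3) \<ge> t powr \<nu> * ln p / 2" .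
  have a: "exp (- (1/\<nu>) * (t * u) powr \<nu> * (1 - 1/3)) \<le> exp (- (t powr \<nu> * ln p / 2))"
    by (subst exp_le_cancel_iff) (use a0 in linarith)
  have ya: "y \<le> exp (- (t powr \<nu> * ln p / 2))" using y a by (rule order_trans)
  have "p * y \<le> p * exp (- (t powr \<nu> * ln p / 2))" using mult_left_mono[OF ya] p0 by simp
  also have "\<dots> = exp (ln p - t powr \<nu> * ln p / 2)"
    by (simp only: exp_diff exp_ln[OF p0] exp_minus divide_inverse)
  also have "\<dots> \<le> exp (- (1/4) * t powr \<nu>)"
  proof -
    have "ln p * (1 - t powr \<nu> / 2) \<le> 1 * (1 - t powr \<nu> / 2)"
      using p tn by (intro mult_right_mono_neg) auto
    then show ?thesis using tn by (simp add: algebra_simps)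
  qed
  finally show ?thesis .
qed

theorem mainTheorem1:
  fixes \<nu> :: real and F :: "real \<Rightarrow> real"
    and M :: "nat \<Rightarrow> 'a measure" and \<epsilon> :: "nat \<Rightarrow> nat \<Rightarrow> 'a \<Rightarrow> real"
  assumes "\<nu> > 0"
    and "distribution_function F"
    and "AGG \<nu> F"
    and "\<And>p. prob_space (M p)"
    and "\<And>p j. j \<in> {1..p} \<Longrightarrow> \<epsilon> p j \<in> borel_measurable (M p)"
    and "\<And>p j x. j \<in> {1..p} \<Longrightarrow>
            measure (M p) {\<omega> \<in> space (M p). \<epsilon> p j \<omega> \<le> x} = F x"
  defines "\<xi> \<equiv> (\<lambda>p::nat. \<lambda>\<omega>.
      Max ((\<lambda>j. \<epsilon> p j \<omega>) ` {1..p}) /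
      ((1 + (gen_inv F (1 - 1 / (real p * ln (real p))) / gen_inv F (1 - 1 / real p) - 1))
        * gen_inv F (1 - 1 / real p)))"
  shows "\<exists>p0>0. \<exists>t0>0. \<exists>C>0.
           (\<forall>p::nat. \<forall>t::real. real p > p0 \<longrightarrow> t > t0 \<longrightarrow>
              measure (M p) {\<omega> \<in> space (M p). \<xi> p \<omega> > t} \<le> exp (- C * t powr \<nu>))
         \<and> unif_integrable M (\<lambda>p \<omega>. max (\<xi> p \<omega>) 0) {p. real p > p0}"
proof -
  note nu = assms(1) and df = assms(2) and agg = assms(3) and ps = assms(4)
    and em = assms(5) and marg = assms(6)
  obtain C1 where C1: "C1 > 0" and
    lb: "\<And>x. x \<ge> C1 \<Longrightarrow> - (1/\<nu>) * x powr \<nu> * (1 + 1/3) \<le> ln (1 - F x)" and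
    ub: "\<And>x. x \<ge> C1 \<Longrightarrow> ln (1 - F x) \<le> - (1/\<nu>) * x powr \<nu> * (1 - 1/3)"
    using agg unfolding AGG_def by (metis zero_less_divide_1_iff zero_less_numeral)
  define a where "a = 1 - F C1"
  have a0: "a > 0" using df_lt1[OF df nu agg, of C1] by (simp add: a_def)
  define p0 where "p0 = max (max 3 (1/a)) (exp ((4/3) * C1 powr \<nu> / \<nu>))"
  define t0 where "t0 = max 1 (4 powr (1/\<nu>))"
  have p0_pos: "p0 > 0" by (simp add: p0_def)
  have t0_pos: "t0 > 0" by (simp add: t0_def)
  have key: "gen_inv F (1 - 1 / real p) > 0 \<and> gen_inv F (1 - 1 / (real p * ln (real p))) \<ge> C1
      \<and> gen_inv F (1 - 1 / (real p * ln (real p))) powr \<nu> \<ge> \<nu> * ln (real p) * 3 / 4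
      \<and> ln (real p) \<ge> 1"
    if pp: "real p > p0" for p :: nat
  proof -
    have p3: "real p > 3" and pa: "real p > 1/a" and pe: "real p > exp ((4/3) * C1 powr \<nu> / \<nu>)"
      using pp by (auto simp: p0_def)
    have lnp: "ln (real p) \<ge> 1"
    proof -
      have "exp 1 \<le> real p" using exp_le p3 by linarith
      then have "ln (exp 1) \<le> ln (real p)" using p3 by (subst ln_le_cancel_iff) auto
      then show ?thesis by simp
    qed
    have lnp2: "ln (real p) > (4/3) * C1 powr \<nu> / \<nu>"
    proof -
      have "ln (exp ((4/3) * C1 powr \<nu> / \<nu>)) < ln (real p)" using pe p3 by (subst ln_less_cancel_iff) auto
      then show ?thesis by simp
    qed
    define q where "q = real p * ln (real p)"
    have qp: "q \<ge> real p" unfolding q_def using lnp p3 by (simp add: mult_le_cancel_left1)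
    have lnq: "ln q \<ge> ln (real p)" using qp p3 by simp
    have FCp: "F C1 < 1 - 1 / real p"
    proof -
      have "1 / real p < a" using pa a0 p3 by (simp add: field_simps)
      then show ?thesis by (simp add: a_def)
    qed
    have FCq: "F C1 < 1 - 1 / q"
    proof -
      have "1 / q \<le> 1 / real p" using qp p3 by (intro divide_left_mono) auto
      then show ?thesis using FCp by simp
    qed
    have Lp: "(\<nu> * ln (real p) / (1 + 1/3)) powr (1/\<nu>) \<le> gen_inv F (1 - 1 / real p)"
      using u_lower[OF df nu agg _ C1 lb _ FCp] p3 by simp
    have Lq: "(\<nu> * ln q / (1 + 1/3)) powr (1/\<nu>) \<le> gen_inv F (1 - 1 / q)"
      using u_lower[OF df nu agg _ C1 lb _ FCq] p3 qp by simp
    have up: "gen_inv F (1 - 1 / real p) > 0"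
    proof -
      have "\<nu> * ln (real p) / (1 + 1/3) > 0" using nu lnp by simp
      then have "(\<nu> * ln (real p) / (1 + 1/3)) powr (1/\<nu>) > 0" using nu lnp by simp
      then show ?thesis using Lp by linarith
    qed
    define L where "L = (\<nu> * ln q / (1 + 1/3)) powr (1/\<nu>)"
    have Lnn: "\<nu> * ln q / (1 + 1/3) \<ge> 0" using nu lnq lnp by simp
    have LL: "L powr \<nu> = \<nu> * ln q / (1 + 1/3)"
      unfolding L_def using nu Lnn by (simp add: powr_powr)
    have L0: "L \<ge> 0" by (simp add: L_def)
    have "C1 powr \<nu> \<le> \<nu> * ln q / (1 + 1/3)"
    proof -
      have "(4/3) * C1 powr \<nu> / \<nu> \<le> ln q" using lnp2 lnq by linarith
      then show ?thesis using nu by (simp add: field_simps)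
    qed
    then have "(C1 powr \<nu>) powr (1/\<nu>) \<le> L" unfolding L_def using nu by (intro powr_mono2) auto
    then have CL: "C1 \<le> L" using C1 nu by (simp add: powr_powr)
    have uqC: "gen_inv F (1 - 1 / q) \<ge> C1" using CL Lq L_def by linarith
    have "L powr \<nu> \<le> gen_inv F (1 - 1 / q) powr \<nu>" using Lq L0 nu unfolding L_def by (intro powr_mono2) auto
    moreover have "L powr \<nu> \<ge> \<nu> * ln (real p) * 3 / 4" unfolding LL using lnq nu by (simp add: field_simps)
    ultimately have "gen_inv F (1 - 1 / q) powr \<nu> \<ge> \<nu> * ln (real p) * 3 / 4" by linarith
    then show ?thesis using up uqC lnp by (simp add: q_def)
  qed
  have xi_eq: "\<xi> p \<omega> = Max ((\<lambda>j. \<epsilon> p j \<omega>) ` {1..p}) / gen_inv F (1 - 1 / (real p * ln (real p)))"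
    if pp: "real p > p0" for p :: nat and \<omega>
    using key[OF pp] unfolding \<xi>_def by simp
  have tail: "measure (M p) {\<omega> \<in> space (M p). \<xi> p \<omega> > t} \<le> exp (- (1/4) * t powr \<nu>)"
    if pp: "real p > p0" and tt: "t > t0" for p :: nat and t
  proof -
    define u where "u = gen_inv F (1 - 1 / (real p * ln (real p)))"
    have k: "gen_inv F (1 - 1 / real p) > 0" "u \<ge> C1" "u powr \<nu> \<ge> \<nu> * ln (real p) * 3 / 4"
      "ln (real p) \<ge> 1" using key[OF pp] by (auto simp: u_def)
    have u0: "u > 0" using k C1 by simp
    have p1: "p \<ge> 1" using pp p0_pos by (cases p) (auto simp: p0_def)
    have t1: "t > 1" using tt by (simp add: t0_def)
    have t4: "t powr \<nu> \<ge> 4"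
    proof -
      have "4 powr (1/\<nu>) < t" using tt by (simp add: t0_def)
      then have "(4 powr (1/\<nu>)) powr \<nu> \<le> t powr \<nu>" using nu by (intro powr_mono2) auto
      then show ?thesis using nu by (simp add: powr_powr)
    qed
    have em': "\<And>j. j \<in> {1..p} \<Longrightarrow> \<epsilon> p j \<in> borel_measurable (M p)" using em by blast
    have marg': "\<And>j x. j \<in> {1..p} \<Longrightarrow> measure (M p) {\<omega> \<in> space (M p). \<epsilon> p j \<omega> \<le> x} = F x"
      using marg by blast
    have set_eq: "{\<omega> \<in> space (M p). \<xi> p \<omega> > t} = {\<omega> \<in> space (M p). Max ((\<lambda>j. \<epsilon> p j \<omega>) ` {1..p}) / u > t}"
      using xi_eq[OF pp] by (simp add: u_def)
    have "measure (M p) {\<omega> \<in> space (M p). \<xi> p \<omega> > t} \<le> real p * (1 - F (t * u))"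
      unfolding set_eq using max_tail[where N="M p" and e="\<epsilon> p" and F=F and u=u and t=t, OF ps[of p] p1 em' marg' u0] by blast
    also have "\<dots> \<le> exp (- (1/4) * t powr \<nu>)"
    proof (rule arith_bound[OF nu _ k(4) u0 k(3) _ t4])
      show "t > 0" using t1 by simp
      show "real p > 0" using p1 by simp
      have tu: "t * u \<ge> C1" using k(2) t1 u0
      proof -
        have "1 * u \<le> t * u" using t1 u0 by (intro mult_right_mono) auto
        then show ?thesis using k(2) by simp
      qed
      show "1 - F (t * u) \<le> exp (- (1 / \<nu>) * (t * u) powr \<nu> * (1 - 1 / 3))"
        using agg_upper[OF df nu _ _ ub[OF tu]] tu C1 by simp
    qed
    finally show ?thesis .
  qed
  have ui: "unif_integrable M (\<lambda>p \<omega>. max (\<xi> p \<omega>) 0) {p. real p > p0}"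
  proof (rule UI_from_tail[where C = "1/4" and \<nu> = \<nu> and thr = t0])
    fix p assume "p \<in> {p. real p > p0}"
    show "prob_space (M p)" by (rule ps)
    show "(\<lambda>\<omega>. max (\<xi> p \<omega>) 0) \<in> borel_measurable (M p)"
      unfolding \<xi>_def using em[of _ p] by (intro borel_measurable_max borel_measurable_divide borel_measurable_Max) auto
  next
    fix p t assume pI: "p \<in> {p. real p > p0}" and tt: "t > t0"
    have "{\<omega> \<in> space (M p). max (\<xi> p \<omega>) 0 > t} = {\<omega> \<in> space (M p). \<xi> p \<omega> > t}"
      using tt t0_pos by auto
    then show "measure (M p) {\<omega> \<in> space (M p). max (\<xi> p \<omega>) 0 > t} \<le> exp (- (1/4) * t powr \<nu>)"
      using tail[OF _ tt, of p] pI by simp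
  qed (use nu in auto)
  have tl: "\<forall>p::nat. \<forall>t::real. real p > p0 \<longrightarrow> t > t0 \<longrightarrow>
              measure (M p) {\<omega> \<in> space (M p). \<xi> p \<omega> > t} \<le> exp (- (1/4) * t powr \<nu>)"
    using tail by blast
  have c4: "(1/4::real) > 0" by simp
  show ?thesis using p0_pos t0_pos ui tl c4 by blast
qed

end
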